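(* On each of the three charts of $\mathbb OP^2$, with chart coordinates $(u,v)\in\mathbb O^2$, consider the quadratic form on tangent vectors $(du,dv)=(\xi,\eta)\in\mathbb O^2$ $$ds^2=\frac{|\xi|^2(1+|v|^2)+|\eta|^2(1+|u|^2)-2\,\mathrm{Re}\big[(u\bar v)(\eta\bar\xi)\big]}{(1+|u|^2+|v|^2)^2}.$$ Then these expressions are positive definite and agree on chart overlaps, so they define a Riemannian metric on $\mathbb OP^2$.
   Context: Octonions: $\mathbb O=\mathbb H\oplus\mathbb H$ with product $(q_1,q_2)(p_1,p_2)=(q_1p_1-\bar p_2q_2,\ p_2q_1+q_2\bar p_1)$, conjugation $\overline{(q_1,q_2)}=(\bar q_1,-q_2)$, $\mathrm{Re}(a)$ the real part of the first quaternion component, inner product $\langle a,b\rangle=\mathrm{Re}(a\bar b)$, $|a|^2=\langle a,a\rangle$. $\mathbb OP^2=\mathcal U/_\sim$ where $\mathcal U=(\{1\}\times\mathbb O\times\mathbb O)\cup(\mathbb O\times\{1\}\times\mathbb O)\cup(\mathbb O\times\mathbb O\times\{1\})$ and $[a,b,c]\sim[d,e,f]$ iff $a=d\lambda,b=e\lambda,c=f\lambda$ for some $\lambda\in\mathbb O\setminus\{0\}$. The charts are $[1,u,v]\mapsto(u,v)$, $[u,1,v]\mapsto(u,v)$, $[u,v,1]\mapsto(u,v)$; transition maps are e.g. $(a,b)\mapsto(a^{-1},ba^{-1})$ between the first two. *)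

theory Defs
  imports "HOL-Analysis.Analysis"
begin

text \<open>Quaternions as 4-tuples of reals (a + b i + c j + d k), with the Hamilton product.
  The additive structure, scaling and topology come from the product type instances.\<close>
type_synonym quat = "real \<times> real \<times> real \<times> real"

fun qmult :: "quat \<Rightarrow> quat \<Rightarrow> quat" where
  "qmult (a1, b1, c1, d1) (a2, b2, c2, d2) =
     (a1*a2 - b1*b2 - c1*c2 - d1*d2,
      a1*b2 + b1*a2 + c1*d2 - d1*c2,
      a1*c2 - b1*d2 + c1*a2 + d1*b2,
      a1*d2 + b1*c2 - c1*b2 + d1*a2)"

fun qcnj :: "quat \<Rightarrow> quat" where
  "qcnj (a, b, c, d) = (a, -b, -c, -d)"

text \<open>Octonions O = H + H (Cayley-Dickson), with the product from the paper.\<close>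
type_synonym oct = "quat \<times> quat"

fun omult :: "oct \<Rightarrow> oct \<Rightarrow> oct" where
  "omult (q1, q2) (p1, p2) = (qmult q1 p1 - qmult (qcnj p2) q2, qmult p2 q1 + qmult q2 (qcnj p1))"

fun ocnj :: "oct \<Rightarrow> oct" where
  "ocnj (q1, q2) = (qcnj q1, - q2)"

definition oone :: oct where
  "oone = ((1, 0, 0, 0), 0)"

definition oRe :: "oct \<Rightarrow> real" where
  "oRe a = fst (fst a)"

definition oinner :: "oct \<Rightarrow> oct \<Rightarrow> real" where
  "oinner a b = oRe (omult a (ocnj b))"

definition onorm2 :: "oct \<Rightarrow> real" where
  "onorm2 a = oinner a a"

definition oinv :: "oct \<Rightarrow> oct" where
  "oinv a = (1 / onorm2 a) *\<^sub>R ocnj a"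

definition chart_emb :: "nat \<Rightarrow> oct \<times> oct \<Rightarrow> oct \<times> oct \<times> oct" where
  "chart_emb k p = (if k = 0 then (oone, fst p, snd p)
                    else if k = 1 then (fst p, oone, snd p)
                    else (fst p, snd p, oone))"

definition tcoord :: "nat \<Rightarrow> oct \<times> oct \<times> oct \<Rightarrow> oct" where
  "tcoord k t = (if k = 0 then fst t else if k = 1 then fst (snd t) else snd (snd t))"

definition trest :: "nat \<Rightarrow> oct \<times> oct \<times> oct \<Rightarrow> oct \<times> oct" where
  "trest k t = (if k = 0 then snd t
                else if k = 1 then (fst t, snd (snd t))
                else (fst t, fst (snd t)))"

text \<open>Transition map from chart i to chart j: [t0,t1,t2] ~ [t0 l^{-1}, t1 l^{-1}, t2 l^{-1}]
  with l = t_j (i.e. lambda = t_j), defined where t_j \<noteq> 0.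
  E.g. i=0, j=1 gives (a,b) \<mapsto> (a^{-1}, b a^{-1}).\<close>
definition transition :: "nat \<Rightarrow> nat \<Rightarrow> oct \<times> oct \<Rightarrow> oct \<times> oct" where
  "transition i j p =
     (let t = chart_emb i p; l = tcoord j t; r = trest j t
      in (omult (fst r) (oinv l), omult (snd r) (oinv l)))"

definition ds2 :: "oct \<times> oct \<Rightarrow> oct \<times> oct \<Rightarrow> real" where
  "ds2 p w = (let u = fst p; v = snd p; \<xi> = fst w; \<eta> = snd w in
     (onorm2 \<xi> * (1 + onorm2 v) + onorm2 \<eta> * (1 + onorm2 u)
       - 2 * oRe (omult (omult u (ocnj v)) (omult \<eta> (ocnj \<xi>))))
     / (1 + onorm2 u + onorm2 v)^2)"

end

theory Submission
  imports Defs
begin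


lemma oct_ex: obtains a1 a2 a3 a4 a5 a6 a7 a8 :: real where "x = ((a1,a2,a3,a4),(a5,a6,a7,a8))"
  by (metis prod.exhaust)

lemma ocnj_ocnj[simp]: "ocnj (ocnj x) = x"
  by (rule oct_ex[of x]) simp

lemma ocnj_omult[simp]: "ocnj (omult x y) = omult (ocnj y) (ocnj x)"
  by (rule oct_ex[of x], rule oct_ex[of y]) (simp add: algebra_simps)

lemma inner_ocnj[simp]: "ocnj x \<bullet> ocnj y = x \<bullet> y"
  by (rule oct_ex[of x], rule oct_ex[of y]) (simp add: algebra_simps)

lemma oRe_omult: "oRe (omult x y) = x \<bullet> ocnj y"
  by (rule oct_ex[of x], rule oct_ex[of y]) (simp add: algebra_simps oRe_def)

lemma onorm2_eq: "onorm2 x = x \<bullet> x"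
  by (rule oct_ex[of x]) (simp add: algebra_simps oRe_def onorm2_def oinner_def)

lemma N_mult: "omult x y \<bullet> omult x y = (x \<bullet> x) * (y \<bullet> y)"
  by (rule oct_ex[of x], rule oct_ex[of y]) (simp add: algebra_simps power2_eq_square)

lemma L5a: "omult x y \<bullet> z = y \<bullet> omult (ocnj x) z"
  by (rule oct_ex[of x], rule oct_ex[of y], rule oct_ex[of z]) (simp add: algebra_simps)

lemma L5b: "omult x y \<bullet> z = x \<bullet> omult z (ocnj y)"
  by (rule oct_ex[of x], rule oct_ex[of y], rule oct_ex[of z]) (simp add: algebra_simps)

lemma L6a: "omult (ocnj x) (omult x y) = (x \<bullet> x) *\<^sub>R y"
  by (rule oct_ex[of x], rule oct_ex[of y]) (simp add: algebra_simps)

lemma L6b: "omult (omult y x) (ocnj x) = (x \<bullet> x) *\<^sub>R y"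
  by (rule oct_ex[of x], rule oct_ex[of y]) (simp add: algebra_simps)

lemma L7b: "omult (omult w z) (ocnj x) + omult (omult w x) (ocnj z) = (2*(x \<bullet> z)) *\<^sub>R w"
  by (rule oct_ex[of x], rule oct_ex[of w], rule oct_ex[of z]) (simp add: algebra_simps)

lemma omult_add_left: "omult (x + y) z = omult x z + omult y z"
  by (rule oct_ex[of x], rule oct_ex[of y], rule oct_ex[of z]) (simp add: algebra_simps)
lemma omult_add_right: "omult z (x + y) = omult z x + omult z y"
  by (rule oct_ex[of x], rule oct_ex[of y], rule oct_ex[of z]) (simp add: algebra_simps)
lemma omult_scaleR_left: "omult (r *\<^sub>R x) y = r *\<^sub>R omult x y"
  by (rule oct_ex[of x], rule oct_ex[of y]) (simp add: algebra_simps)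
lemma omult_scaleR_right: "omult x (r *\<^sub>R y) = r *\<^sub>R omult x y"
  by (rule oct_ex[of x], rule oct_ex[of y]) (simp add: algebra_simps)
lemma ocnj_add: "ocnj (x + y) = ocnj x + ocnj y"
  by (rule oct_ex[of x], rule oct_ex[of y]) (simp add: algebra_simps)
lemma ocnj_scaleR: "ocnj (r *\<^sub>R x) = r *\<^sub>R ocnj x"
  by (rule oct_ex[of x]) (simp add: algebra_simps)

lemma omult_oone_left[simp]: "omult oone x = x"
  by (rule oct_ex[of x]) (simp add: oone_def zero_prod_def)
lemma omult_oone_right[simp]: "omult x oone = x"
  by (rule oct_ex[of x]) (simp add: oone_def zero_prod_def)
lemma oinv_oone[simp]: "oinv oone = oone"
  by (simp add: oinv_def onorm2_eq oone_def zero_prod_def)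



lemma omult_bb: "bounded_bilinear omult"
proof -
  have "bilinear omult"
    unfolding bilinear_def
    by (simp add: linear_iff omult_add_left omult_add_right omult_scaleR_left omult_scaleR_right)
  then show ?thesis using bilinear_conv_bounded_bilinear by blast
qed

lemma ocnj_bl: "bounded_linear ocnj"
proof -
  have "linear ocnj" by (simp add: linear_iff ocnj_add ocnj_scaleR)
  then show ?thesis using linear_conv_bounded_linear by blast
qed

lemmas omult_deriv[derivative_intros] = bounded_bilinear.FDERIV[OF omult_bb]
lemmas ocnj_deriv[derivative_intros] = bounded_linear.has_derivative[OF ocnj_bl]

lemma inner_mult_left: "omult b y \<bullet> omult b z = (b \<bullet> b) * (y \<bullet> z)"
  by (simp only: L5a[of b y] L6a inner_scaleR_right)

lemma inner_mult_right: "omult y a \<bullet> omult z a = (a \<bullet> a) * (y \<bullet> z)"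
  by (simp only: L5b[of y a] L6b inner_scaleR_right)

lemma L8: "omult y x \<bullet> omult w z + omult y z \<bullet> omult w x = 2*(y \<bullet> w)*(x \<bullet> z)"
proof -
  have "omult y x \<bullet> omult w z + omult y z \<bullet> omult w x
     = y \<bullet> (omult (omult w z) (ocnj x) + omult (omult w x) (ocnj z))"
    by (simp only: L5b[of y] inner_add_right)
  also have "\<dots> = 2*(y \<bullet> w)*(x \<bullet> z)" by (simp only: L7b inner_scaleR_right mult_ac)
  finally show ?thesis .
qed

lemma norm_omult: "norm (omult x y) = norm x * norm y"
  by (simp only: norm_eq_sqrt_inner N_mult real_sqrt_mult)

lemma ds2_alt: "ds2 p w = (let u = fst p; v = snd p; \<xi> = fst w; \<eta> = snd w in
     ((\<xi>\<bullet>\<xi>) * (1 + v\<bullet>v) + (\<eta>\<bullet>\<eta>) * (1 + u\<bullet>u)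
       - 2 * (omult u (ocnj v) \<bullet> omult \<xi> (ocnj \<eta>)))
     / (1 + u\<bullet>u + v\<bullet>v)^2)"
  by (simp add: ds2_def onorm2_eq oRe_omult)

lemma ds2_pos: assumes "w \<noteq> 0" shows "ds2 p w > 0"
proof -
  obtain u v where p: "p = (u,v)" by (cases p)
  obtain x y where w: "w = (x,y)" by (cases w)
  have xy: "x \<noteq> 0 \<or> y \<noteq> 0" using assms w by (auto simp: zero_prod_def)
  have cs: "omult u (ocnj v) \<bullet> omult x (ocnj y) \<le> norm u * norm v * norm x * norm y"
  proof -
    have "omult u (ocnj v) \<bullet> omult x (ocnj y) \<le> norm (omult u (ocnj v)) * norm (omult x (ocnj y))"
      by (rule norm_cauchy_schwarz)
    moreover have "norm (ocnj v) = norm v" "norm (ocnj y) = norm y"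
      by (simp_all add: norm_eq_sqrt_inner)
    ultimately show ?thesis by (simp add: norm_omult mult_ac)
  qed
  have pos: "norm x ^2 + norm y ^2 > 0" using xy by (auto simp: add_pos_nonneg add_nonneg_pos)
  have "(x\<bullet>x) * (1 + v\<bullet>v) + (y\<bullet>y) * (1 + u\<bullet>u) - 2 * (omult u (ocnj v) \<bullet> omult x (ocnj y))
     \<ge> norm x ^2 + norm y ^2 + (norm x * norm v - norm y * norm u)^2"
  proof -
    have e: "x\<bullet>x = norm x ^2" "y\<bullet>y = norm y ^2" "u\<bullet>u = norm u ^2" "v\<bullet>v = norm v ^2"
      by (simp_all add: power2_norm_eq_inner)
    show ?thesis unfolding e using cs by (simp add: power2_eq_square algebra_simps)
  qed
  moreover have "(norm x * norm v - norm y * norm u)^2 \<ge> 0" by simp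
  ultimately have num: "(x\<bullet>x) * (1 + v\<bullet>v) + (y\<bullet>y) * (1 + u\<bullet>u) - 2 * (omult u (ocnj v) \<bullet> omult x (ocnj y)) > 0"
    using pos by linarith
  have den: "(1 + u\<bullet>u + v\<bullet>v)^2 > 0"
  proof -
    have "1 + u\<bullet>u + v\<bullet>v > 0" using inner_ge_zero[of u] inner_ge_zero[of v] by linarith
    then show ?thesis by simp
  qed
  have "ds2 p w = ((x\<bullet>x) * (1 + v\<bullet>v) + (y\<bullet>y) * (1 + u\<bullet>u) - 2 * (omult u (ocnj v) \<bullet> omult x (ocnj y))) / (1 + u\<bullet>u + v\<bullet>v)^2"
    unfolding p w ds2_alt Let_def fst_conv snd_conv ..
  then show ?thesis using num den by (simp only: divide_pos_pos)
qed



definition T01 :: "oct \<times> oct \<Rightarrow> oct \<times> oct" where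
  "T01 p = (oinv (fst p), omult (snd p) (oinv (fst p)))"
definition Dinv :: "oct \<Rightarrow> oct \<Rightarrow> oct" where
  "Dinv a x = (1/(a\<bullet>a)) *\<^sub>R ocnj x - (2*(a\<bullet>x)/(a\<bullet>a)^2) *\<^sub>R ocnj a"
definition D01 :: "oct \<Rightarrow> oct \<Rightarrow> oct \<times> oct \<Rightarrow> oct \<times> oct" where
  "D01 a b w = (Dinv a (fst w), omult (snd w) (oinv a) + omult b (Dinv a (fst w)))"

lemma oinv_alt: "oinv x = inverse (x\<bullet>x) *\<^sub>R ocnj x"
  by (simp add: oinv_def onorm2_eq divide_inverse)

lemma T01_deriv: assumes "a \<noteq> 0" shows "(T01 has_derivative D01 a b) (at (a,b))"
proof -
  have aa: "a \<bullet> a \<noteq> 0" using assms by simp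
  have f0: "((\<lambda>p. fst p) has_derivative (\<lambda>h. fst h)) (at (a,b))"
    by (rule has_derivative_fst[OF has_derivative_ident])
  have f1: "((\<lambda>p. fst p \<bullet> fst p) has_derivative (\<lambda>h. fst (a,b) \<bullet> fst h + fst h \<bullet> fst (a,b))) (at (a,b))"
    by (rule has_derivative_inner[OF f0 f0])
  have f2: "((\<lambda>p. inverse (fst p \<bullet> fst p)) has_derivative
      (\<lambda>h. - (inverse (fst (a,b) \<bullet> fst (a,b)) * (fst (a,b) \<bullet> fst h + fst h \<bullet> fst (a,b)) * inverse (fst (a,b) \<bullet> fst (a,b))))) (at (a,b))"
    by (rule Deriv.has_derivative_inverse[OF _ f1]) (use aa in simp)
  have f3: "((\<lambda>p. ocnj (fst p)) has_derivative (\<lambda>h. ocnj (fst h))) (at (a,b))"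
    by (rule ocnj_deriv[OF f0])
  note f4 = has_derivative_scaleR[OF f2 f3]
  have e: "(\<lambda>h. inverse (fst (a,b) \<bullet> fst (a,b)) *\<^sub>R ocnj (fst h) +
      (- (inverse (fst (a,b) \<bullet> fst (a,b)) * (fst (a,b) \<bullet> fst h + fst h \<bullet> fst (a,b)) * inverse (fst (a,b) \<bullet> fst (a,b)))) *\<^sub>R ocnj (fst (a,b)))
      = (\<lambda>w. Dinv a (fst w))"
    by (rule ext) (simp add: Dinv_def inner_commute divide_inverse power2_eq_square algebra_simps)
  have d1: "((\<lambda>p. oinv (fst p)) has_derivative (\<lambda>w. Dinv a (fst w))) (at (a,b))"
    unfolding oinv_alt using f4[unfolded e] .
  have "((\<lambda>p. (oinv (fst p), omult (snd p) (oinv (fst p)))) has_derivative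
     (\<lambda>w. (Dinv a (fst w), omult (snd (a,b)) (Dinv a (fst w)) + omult (snd w) (oinv (fst (a,b)))))) (at (a,b))"
    by (intro has_derivative_Pair d1 omult_deriv has_derivative_snd has_derivative_ident) 
  then show ?thesis unfolding T01_def[abs_def] D01_def[abs_def] by (simp add: add.commute)
qed



lemmas om_diff_right = bounded_bilinear.diff_right[OF omult_bb]
lemmas om_add_right = bounded_bilinear.add_right[OF omult_bb]

lemma num: fixes n Nb Nx Ny K c e :: real assumes n0: "n > 0"
  shows "(Nx/n^2)*(1+Nb/n) + ((n*Ny+Nb*Nx+2*K-4*c*e)/n^2)*(1+1/n) - 2*((K+Nb*Nx-2*c*e)/n^3) = (Nx*(1+Nb)+Ny*(1+n)-2*(2*c*e-K))/n^2"
proof -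
  have "n^3 * ((Nx/n^2)*(1+Nb/n) + ((n*Ny+Nb*Nx+2*K-4*c*e)/n^2)*(1+1/n) - 2*((K+Nb*Nx-2*c*e)/n^3))
     = Nx*(n+Nb) + (n*Ny+Nb*Nx+2*K-4*c*e)*(n+1) - 2*(K+Nb*Nx-2*c*e)"
    using n0 by (simp add: field_simps power2_eq_square power3_eq_cube)
  also have "\<dots> = n^3 * ((Nx*(1+Nb)+Ny*(1+n)-2*(2*c*e-K))/n^2)"
    using n0 by (simp add: field_simps power2_eq_square power3_eq_cube)
  finally have "n^3 * ((Nx/n^2)*(1+Nb/n) + ((n*Ny+Nb*Nx+2*K-4*c*e)/n^2)*(1+1/n) - 2*((K+Nb*Nx-2*c*e)/n^3))
     = n^3 * ((Nx*(1+Nb)+Ny*(1+n)-2*(2*c*e-K))/n^2)" .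
  moreover have "n^3 \<noteq> 0" using n0 by simp
  ultimately show ?thesis by (metis mult_left_cancel)
qed
lemma fin: fixes n Nb Nx Ny K c e :: real assumes n0: "n > 0" "Nb \<ge> 0"
  shows "(Z/n^2) / (1 + 1/n + Nb/n)^2 = Z / (1+n+Nb)^2"
proof -
  have "1 + 1/n + Nb/n = (1+n+Nb)/n" using n0 by (simp add: field_simps)
  then show ?thesis using n0 by (simp add: power_divide)
qed

lemma T01_inv:
  assumes "a \<noteq> 0"
  shows "ds2 (T01 (a,b)) (D01 a b (x,y)) = ds2 (a,b) (x,y)"
proof -
  define n where "n = a \<bullet> a"
  define c where "c = a \<bullet> x"
  define e where "e = y \<bullet> b"
  define Nx where "Nx = x \<bullet> x"
  define Ny where "Ny = y \<bullet> y"
  define Nb where "Nb = b \<bullet> b"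
  define A where "A = ocnj a"
  define X where "X = ocnj x"
  define K where "K = omult y A \<bullet> omult b X"
  have n0: "n > 0" using assms by (simp add: n_def)
  have U: "oinv a = (1/n) *\<^sub>R A" by (simp add: oinv_def onorm2_eq n_def A_def)
  have dU: "Dinv a x = (1/n) *\<^sub>R X - (2*c/n^2) *\<^sub>R A" by (simp add: Dinv_def n_def c_def A_def X_def)
  have V: "omult b (oinv a) = (1/n) *\<^sub>R omult b A" by (simp add: U omult_scaleR_right)
  have dV: "omult y (oinv a) + omult b (Dinv a x) = (1/n) *\<^sub>R omult y A + (1/n) *\<^sub>R omult b X - (2*c/n^2) *\<^sub>R omult b A"
    by (simp add: U dU omult_scaleR_right om_diff_right)
  have a1: "A \<bullet> A = n" by (simp add: A_def n_def)
  have a2: "X \<bullet> A = c" "A \<bullet> X = c" by (simp_all add: A_def X_def c_def inner_commute)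
  have a3: "X \<bullet> X = Nx" by (simp add: X_def Nx_def)
  have m1: "omult y A \<bullet> omult y A = Ny * n" by (simp add: N_mult a1 Ny_def)
  have m2: "omult b X \<bullet> omult b X = Nb * Nx" by (simp add: N_mult a3 Nb_def)
  have m3: "omult b A \<bullet> omult b A = Nb * n" by (simp add: N_mult a1 Nb_def)
  have m4: "omult y A \<bullet> omult b A = n * e" "omult b A \<bullet> omult y A = n * e"
    by (simp_all add: inner_mult_right a1 e_def inner_commute)
  have m5: "omult b X \<bullet> omult b A = Nb * c" "omult b A \<bullet> omult b X = Nb * c"
    by (simp_all add: inner_mult_left a2 Nb_def)
  have m6: "omult b X \<bullet> omult y A = K" by (simp add: K_def inner_commute)
  have h1: "oinv a \<bullet> oinv a = 1/n" using n0 by (simp add: U a1 power2_eq_square)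
  have h2: "omult b (oinv a) \<bullet> omult b (oinv a) = Nb/n" using n0 by (simp add: V m3 power2_eq_square)
  have h3: "Dinv a x \<bullet> Dinv a x = Nx/n^2"
    using n0 by (simp add: dU inner_diff_left inner_diff_right a1 a2 a3 field_simps power2_eq_square)
  have h4: "(omult y (oinv a) + omult b (Dinv a x)) \<bullet> (omult y (oinv a) + omult b (Dinv a x))
      = (n*Ny + Nb*Nx + 2*K - 4*c*e)/n^2"
    unfolding dV using n0
    by (simp add: inner_diff_left inner_diff_right inner_add_left inner_add_right m1 m2 m3 m4 m5 m6 K_def[symmetric] field_simps power2_eq_square)
  have h5: "omult (oinv a) (ocnj (omult b (oinv a))) = (1/n) *\<^sub>R ocnj b"
  proof -
    have "omult (oinv a) (ocnj (omult b (oinv a))) = (1/n^2) *\<^sub>R omult A (omult a (ocnj b))"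
      by (simp add: U ocnj_scaleR omult_scaleR_left omult_scaleR_right A_def power2_eq_square)
    also have "omult A (omult a (ocnj b)) = n *\<^sub>R ocnj b" by (simp add: A_def L6a n_def)
    finally show ?thesis using n0 by (simp add: power2_eq_square)
  qed
  have h6: "omult (ocnj b) (omult y (oinv a) + omult b (Dinv a x))
      = (1/n) *\<^sub>R omult (ocnj b) (omult y A) + (Nb/n) *\<^sub>R X - (2*c*Nb/n^2) *\<^sub>R A"
    unfolding dV by (simp add: om_diff_right om_add_right omult_scaleR_right L6a[of b] Nb_def)
  have k1: "X \<bullet> omult (ocnj b) (omult y A) = K" using L5a[of b X "omult y A"] m6 by simp
  have k2: "A \<bullet> omult (ocnj b) (omult y A) = n * e" using L5a[of b A "omult y A"] m4 by simp
  have h7: "omult (oinv a) (ocnj (omult b (oinv a))) \<bullet> omult (Dinv a x) (ocnj (omult y (oinv a) + omult b (Dinv a x)))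
      = (K + Nb*Nx - 2*c*e)/n^3"
  proof -
    have "omult (oinv a) (ocnj (omult b (oinv a))) \<bullet> omult (Dinv a x) (ocnj (omult y (oinv a) + omult b (Dinv a x)))
      = (1/n) * (omult (Dinv a x) (ocnj (omult y (oinv a) + omult b (Dinv a x))) \<bullet> ocnj b)"
      by (simp only: h5 inner_scaleR_left inner_commute)
    also have "omult (Dinv a x) (ocnj (omult y (oinv a) + omult b (Dinv a x))) \<bullet> ocnj b
       = Dinv a x \<bullet> omult (ocnj b) (omult y (oinv a) + omult b (Dinv a x))"
      by (simp add: L5b)
    also have "\<dots> = (K + Nb*Nx - 2*c*e)/n^2"
      unfolding h6 unfolding dU using n0
      by (simp add: inner_diff_left inner_diff_right inner_add_right k1 k2 a1 a2 a3 field_simps power2_eq_square)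
    also have "(1/n) * ((K + Nb*Nx - 2*c*e)/n^2) = (K + Nb*Nx - 2*c*e)/n^3"
      using n0 by (simp add: power2_eq_square power3_eq_cube)
    finally show ?thesis .
  qed
  have h8: "omult a (ocnj b) \<bullet> omult x (ocnj y) = 2*c*e - K"
  proof -
    have "omult a (ocnj b) \<bullet> omult x (ocnj y) = omult b A \<bullet> omult y X"
      by (metis inner_ocnj ocnj_omult ocnj_ocnj A_def X_def)
    moreover have "omult y A \<bullet> omult b X + omult y X \<bullet> omult b A = 2*(y \<bullet> b)*(A \<bullet> X)" by (rule L8)
    moreover have "omult y X \<bullet> omult b A = omult b A \<bullet> omult y X" by (rule inner_commute)
    moreover have "2*(y \<bullet> b)*c = 2*c*(y \<bullet> b)" by (simp only: mult_ac)
    ultimately show ?thesis unfolding K_def[symmetric] a2 e_def by linarith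
  qed
  have lhs: "ds2 (T01 (a,b)) (D01 a b (x,y)) =
     ((Nx/n^2) * (1 + Nb/n) + ((n*Ny + Nb*Nx + 2*K - 4*c*e)/n^2) * (1 + 1/n) - 2 * ((K + Nb*Nx - 2*c*e)/n^3))
     / (1 + 1/n + Nb/n)^2"
    unfolding ds2_alt Let_def T01_def D01_def fst_conv snd_conv h1 h2 h3 h4 h7 ..
  have rhs: "ds2 (a,b) (x,y) = (Nx * (1 + Nb) + Ny * (1 + n) - 2 * (2*c*e - K)) / (1 + n + Nb)^2"
    unfolding ds2_alt Let_def fst_conv snd_conv h8 by (simp add: Nx_def Ny_def Nb_def n_def)
  have Nb0: "Nb \<ge> 0" by (simp add: Nb_def)
  show ?thesis unfolding lhs rhs num[OF n0] fin[OF n0 Nb0] ..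
qed



definition PP :: "(oct \<times> oct \<Rightarrow> oct \<times> oct) \<Rightarrow> oct \<times> oct \<Rightarrow> bool" where
  "PP f p \<longleftrightarrow> (\<exists>D. (f has_derivative D) (at p) \<and> (\<forall>w. ds2 (f p) (D w) = ds2 p w))"

definition sw :: "oct \<times> oct \<Rightarrow> oct \<times> oct" where "sw p = (snd p, fst p)"

lemma ds2_swap: "ds2 (sw p) (sw w) = ds2 p w"
proof -
  have e1: "omult (snd p) (ocnj (fst p)) = ocnj (omult (fst p) (ocnj (snd p)))" by simp
  have e2: "omult (snd w) (ocnj (fst w)) = ocnj (omult (fst w) (ocnj (snd w)))" by simp
  show ?thesis unfolding ds2_alt sw_def Let_def fst_conv snd_conv e1 e2 inner_ocnj
    by (simp only: add.commute add.left_commute)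
qed

lemma sw_deriv: "(sw has_derivative sw) (at x)"
proof -
  have "((\<lambda>p. (snd p, fst p)) has_derivative (\<lambda>p. (snd p, fst p))) (at x)"
    by (rule has_derivative_Pair[OF has_derivative_snd[OF has_derivative_ident] has_derivative_fst[OF has_derivative_ident]])
  then show ?thesis unfolding sw_def[abs_def] .
qed

lemma PP_T01: "fst p \<noteq> 0 \<Longrightarrow> PP T01 p"
  unfolding PP_def
  by (cases p) (metis T01_deriv T01_inv fst_conv surj_pair)

lemma PP_id: "PP (\<lambda>p. p) p"
  unfolding PP_def by (intro exI[of _ "\<lambda>w. w"]) simp

lemma PP_out: "PP f p \<Longrightarrow> PP (\<lambda>q. sw (f q)) p"
  unfolding PP_def
proof (elim exE conjE)
  fix D assume d: "(f has_derivative D) (at p)" and inv: "\<forall>w. ds2 (f p) (D w) = ds2 p w"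
  have "((sw \<circ> f) has_derivative (sw \<circ> D)) (at p)" by (rule diff_chain_at[OF d sw_deriv])
  then show "\<exists>D. ((\<lambda>q. sw (f q)) has_derivative D) (at p) \<and> (\<forall>w. ds2 (sw (f p)) (D w) = ds2 p w)"
    using inv ds2_swap by (intro exI[of _ "sw \<circ> D"]) (simp add: o_def)
qed

lemma PP_in: "PP f (sw p) \<Longrightarrow> PP (\<lambda>q. f (sw q)) p"
  unfolding PP_def
proof (elim exE conjE)
  fix D assume d: "(f has_derivative D) (at (sw p))" and inv: "\<forall>w. ds2 (f (sw p)) (D w) = ds2 (sw p) w"
  have "((f \<circ> sw) has_derivative (D \<circ> sw)) (at p)" by (rule diff_chain_at[OF sw_deriv d])
  moreover have "\<forall>w. ds2 (f (sw p)) ((D \<circ> sw) w) = ds2 p w"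
  proof
    fix w
    have "ds2 (f (sw p)) ((D \<circ> sw) w) = ds2 (sw p) (sw w)" unfolding o_apply by (rule spec[OF inv])
    also have "\<dots> = ds2 p w" by (rule ds2_swap)
    finally show "ds2 (f (sw p)) ((D \<circ> sw) w) = ds2 p w" .
  qed
  ultimately show "\<exists>D. ((\<lambda>q. f (sw q)) has_derivative D) (at p) \<and> (\<forall>w. ds2 (f (sw p)) (D w) = ds2 p w)"
    unfolding o_def by blast
qed

lemma tr00: "transition 0 0 p = p"
  unfolding transition_def Let_def chart_emb_def tcoord_def trest_def by simp
lemma tr11: "transition 1 1 p = p"
  unfolding transition_def Let_def chart_emb_def tcoord_def trest_def by simp
lemma tr22: "transition 2 2 p = p"
  unfolding transition_def Let_def chart_emb_def tcoord_def trest_def by simp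
lemma tr01: "transition 0 1 p = T01 p"
  unfolding transition_def Let_def chart_emb_def tcoord_def trest_def T01_def by simp
lemma tr10: "transition 1 0 p = T01 p"
  unfolding transition_def Let_def chart_emb_def tcoord_def trest_def T01_def by simp
lemma tr02: "transition 0 2 p = T01 (sw p)"
  unfolding transition_def Let_def chart_emb_def tcoord_def trest_def T01_def sw_def by simp
lemma tr20: "transition 2 0 p = sw (T01 p)"
  unfolding transition_def Let_def chart_emb_def tcoord_def trest_def T01_def sw_def by simp
lemma tr12: "transition 1 2 p = sw (T01 (sw p))"
  unfolding transition_def Let_def chart_emb_def tcoord_def trest_def T01_def sw_def by simp
lemma tr21: "transition 2 1 p = sw (T01 (sw p))"
  unfolding transition_def Let_def chart_emb_def tcoord_def trest_def T01_def sw_def by simp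

lemma ftr: "transition 0 0 = (\<lambda>p. p)" "transition 1 1 = (\<lambda>p. p)" "transition 2 2 = (\<lambda>p. p)"
  "transition 0 1 = T01" "transition 1 0 = T01" "transition 0 2 = (\<lambda>p. T01 (sw p))"
  "transition 2 0 = (\<lambda>p. sw (T01 p))" "transition 1 2 = (\<lambda>p. sw (T01 (sw p)))"
  "transition 2 1 = (\<lambda>p. sw (T01 (sw p)))"
  by (rule ext, rule tr00 tr11 tr22 tr01 tr10 tr02 tr20 tr12 tr21)+

lemma main2:
  assumes "i < 3" "j < 3" "tcoord j (chart_emb i p) \<noteq> 0"
  shows "PP (transition i j) p"
proof -
  have i: "i = 0 \<or> i = 1 \<or> i = 2" and j: "j = 0 \<or> j = 1 \<or> j = 2" using assms by auto
  have a: "fst p \<noteq> 0" if "(i,j) \<in> {(0,1),(1,0),(2,0)}" using assms(3) that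
    by (auto simp: tcoord_def chart_emb_def)
  have b: "snd p \<noteq> 0" if "(i,j) \<in> {(0,2),(1,2),(2,1)}" using assms(3) that
    by (auto simp: tcoord_def chart_emb_def)
  have sa: "fst (sw p) \<noteq> 0" if "snd p \<noteq> 0" using that by (simp add: sw_def)
  have c01: "PP T01 p" if "fst p \<noteq> 0" using that by (rule PP_T01)
  have c02: "PP (\<lambda>q. T01 (sw q)) p" if "snd p \<noteq> 0"
    by (rule PP_in, rule PP_T01, rule sa, rule that)
  have c20: "PP (\<lambda>q. sw (T01 q)) p" if "fst p \<noteq> 0"
    by (rule PP_out, rule PP_T01, rule that)
  have c12: "PP (\<lambda>q. sw (T01 (sw q))) p" if "snd p \<noteq> 0"
    by (rule PP_out[where f="\<lambda>q. T01 (sw q)"], rule PP_in, rule PP_T01, rule sa, rule that)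
  from i j show ?thesis
  proof (elim disjE)
  qed (simp_all only: ftr PP_id,
       (rule c01 c02 c20 c12, rule a b, simp)+)
qed

theorem theorem3p4:
  shows "(\<forall>p w. w \<noteq> 0 \<longrightarrow> ds2 p w > 0)
       \<and> (\<forall>i<3. \<forall>j<3. \<forall>p. tcoord j (chart_emb i p) \<noteq> 0 \<longrightarrow>
            (\<exists>D. (transition i j has_derivative D) (at p) \<and>
                 (\<forall>w. ds2 (transition i j p) (D w) = ds2 p w)))"
  using ds2_pos main2 unfolding PP_def by blast

end
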